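(* Let $N\ge1$, $\lambda>1$, $p\in(0,1)$. Let $\{\eta_t\}$ be the bias voter model on $\mathbb{T}^N$ with parameters $\lambda$ and $\theta=1$, and let $\{\zeta_t\}$ be the contact process on $\mathbb{T}^N$ with parameter $\lambda$, both started from initial distribution $\mu_p$. Then for every $A\subseteq\mathbb{T}^N$ and every $t\ge0$, \[ P(\eta_t(x)=0\ \forall x\in A)\le P(\zeta_t(x)=0\ \forall x\in A). \]
   Context: $\mathbb{T}^N$ denotes the infinite regular tree in which every vertex has degree $N+1$. The bias voter model on $\mathbb{T}^N$ with parameters $\lambda>\theta>0$ is the spin system on $\{0,1\}^{\mathbb{T}^N}$ with flip rate at $x$ in configuration $\eta$ equal to $\frac{\lambda}{N+1}\sum_{y\sim x}\eta(y)$ if $\eta(x)=0$ and $\frac{\theta}{N+1}\sum_{y\sim x}(1-\eta(y))$ if $\eta(x)=1$. The contact process on $\mathbb{T}^N$ with parameter $\lambda$ is the spin system on $\{0,1\}^{\mathbb{T}^N}$ with flip rate at $x$ in configuration $\zeta$ equal to $1$ if $\zeta(x)=1$ and $\frac{\lambda}{N+1}\sum_{y\sim x}\zeta(y)$ if $\zeta(x)=0$. $\mu_p$ denotes the product Bernoulli measure with density $p$. *)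

theory Defs
  imports "HOL-Probability.Probability"
begin

text \<open>The regular tree T^N (every vertex of degree N+1), realised as the Cayley graph of the
free product of N+1 copies of Z/2: vertices are words over {0..N} with no two equal
consecutive letters; x ~ y iff one word extends the other by exactly one letter.\<close>

definition tree_V :: "nat \<Rightarrow> nat list set" where
  "tree_V N = {w. (\<forall>i\<in>set w. i \<le> N) \<and> (\<forall>k. Suc k < length w \<longrightarrow> w ! k \<noteq> w ! Suc k)}"

definition tree_adj :: "nat list \<Rightarrow> nat list \<Rightarrow> bool" where
  "tree_adj x y \<longleftrightarrow> (\<exists>i. y = x @ [i]) \<or> (\<exists>i. x = y @ [i])"

definition nbrs :: "nat \<Rightarrow> nat list \<Rightarrow> nat list set" where
  "nbrs N x = {y \<in> tree_V N. tree_adj x y}"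

text \<open>Configurations: eta x = True means eta(x) = 1.\<close>
type_synonym config = "nat list \<Rightarrow> bool"

definition config_space :: "nat \<Rightarrow> config measure" where
  "config_space N = PiM (tree_V N) (\<lambda>_. count_space (UNIV :: bool set))"

definition bern_product :: "nat \<Rightarrow> real \<Rightarrow> config measure" where
  "bern_product N p = PiM (tree_V N) (\<lambda>_. measure_pmf (bernoulli_pmf p))"

definition flip :: "config \<Rightarrow> nat list \<Rightarrow> config" where
  "flip \<eta> x = \<eta>(x := \<not> \<eta> x)"

definition bv_rate :: "nat \<Rightarrow> real \<Rightarrow> real \<Rightarrow> config \<Rightarrow> nat list \<Rightarrow> real" where
  "bv_rate N lam th \<eta> x =
     (if \<eta> x then th / real (N + 1) * real (card {y \<in> nbrs N x. \<not> \<eta> y})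
      else lam / real (N + 1) * real (card {y \<in> nbrs N x. \<eta> y}))"

definition cp_rate :: "nat \<Rightarrow> real \<Rightarrow> config \<Rightarrow> nat list \<Rightarrow> real" where
  "cp_rate N lam \<eta> x =
     (if \<eta> x then 1 else lam / real (N + 1) * real (card {y \<in> nbrs N x. \<eta> y}))"

definition cylinder_on :: "nat \<Rightarrow> nat list set \<Rightarrow> (config \<Rightarrow> real) \<Rightarrow> bool" where
  "cylinder_on N F f \<longleftrightarrow> finite F \<and> F \<subseteq> tree_V N \<and>
     (\<forall>\<eta> \<eta>'. (\<forall>x\<in>F. \<eta> x = \<eta>' x) \<longrightarrow> f \<eta> = f \<eta>')"

definition gen :: "(config \<Rightarrow> nat list \<Rightarrow> real) \<Rightarrow> nat list set \<Rightarrow> (config \<Rightarrow> real) \<Rightarrow> config \<Rightarrow> real" where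
  "gen c F f \<eta> = (\<Sum>x\<in>F. c \<eta> x * (f (flip \<eta> x) - f \<eta>))"

text \<open>mu t is the law at time t of the spin system with rates c started from mu0:
the family of time marginals solves the Kolmogorov forward equation
d/dt E_{mu t}[f] = E_{mu t}[Omega f] for all cylinder functions f (which characterises the
law of the spin system uniquely for bounded, finite-range rates).\<close>
definition spin_system_law ::
  "nat \<Rightarrow> (config \<Rightarrow> nat list \<Rightarrow> real) \<Rightarrow> config measure \<Rightarrow> (real \<Rightarrow> config measure) \<Rightarrow> bool" where
  "spin_system_law N c \<mu>0 \<mu> \<longleftrightarrow>
     (\<forall>t\<ge>0. prob_space (\<mu> t) \<and> sets (\<mu> t) = sets (config_space N)) \<and>
     \<mu> 0 = \<mu>0 \<and>
     (\<forall>F f t. cylinder_on N F f \<and> t \<ge> 0 \<longrightarrow>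
        ((\<lambda>s. \<integral>\<eta>. f \<eta> \<partial>\<mu> s) has_real_derivative (\<integral>\<eta>. gen c F f \<eta> \<partial>\<mu> t)) (at t within {0..}))"

end

theory Submission imports Defs begin


lemma nbrs_sub: "nbrs N x \<subseteq> tree_V N"
  unfolding nbrs_def by auto

lemma snoc_last_notin: "x \<noteq> [] \<Longrightarrow> x @ [last x] \<notin> tree_V N"
proof
  assume x: "x \<noteq> []" and "x @ [last x] \<in> tree_V N"
  then have "\<forall>k. Suc k < length (x @ [last x]) \<longrightarrow> (x @ [last x]) ! k \<noteq> (x @ [last x]) ! Suc k"
    unfolding tree_V_def by auto
  then have "(x @ [last x]) ! (length x - 1) \<noteq> (x @ [last x]) ! Suc (length x - 1)"
    using x by (cases x) auto
  then show False using x by (simp add: nth_append last_conv_nth)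
qed

lemma nbrs_finite_card: assumes xV: "x \<in> tree_V N" shows "finite (nbrs N x) \<and> card (nbrs N x) \<le> N + 1"
proof (cases "x = []")
  case True
  have s: "nbrs N x \<subseteq> (\<lambda>i. [i]) ` {..N}"
    using True unfolding nbrs_def tree_adj_def tree_V_def by auto
  have "card ((\<lambda>i. [i]) ` {..N}) \<le> N + 1"
    using card_image_le[of "{..N}" "\<lambda>i. [i]"] by simp
  moreover have "card (nbrs N x) \<le> card ((\<lambda>i. [i]) ` {..N})"
    by (rule card_mono[OF _ s]) simp
  moreover have "finite (nbrs N x)" by (rule finite_subset[OF s]) simp
  ultimately show ?thesis by linarith
next
  case False
  define S where "S = insert (butlast x) ((\<lambda>i. x @ [i]) ` ({..N} - {last x}))"
  have s: "nbrs N x \<subseteq> S"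
  proof
    fix y assume y: "y \<in> nbrs N x"
    then have yV: "y \<in> tree_V N" and adj: "tree_adj x y" unfolding nbrs_def by auto
    show "y \<in> S"
    proof (cases "\<exists>i. y = x @ [i]")
      case True
      then obtain i where i: "y = x @ [i]" by auto
      have "i \<le> N" using yV i unfolding tree_V_def by auto
      moreover have "i \<noteq> last x" using snoc_last_notin[OF False, of N] yV i by auto
      ultimately show ?thesis using i unfolding S_def by auto
    next
      case F: False
      then obtain i where "x = y @ [i]" using adj unfolding tree_adj_def by auto
      then show ?thesis unfolding S_def by simp
    qed
  qed
  have fS: "finite S" unfolding S_def by simp
  have "card ((\<lambda>i. x @ [i]) ` ({..N} - {last x})) \<le> card ({..N} - {last x})"
    by (rule card_image_le) auto
  also have "\<dots> \<le> N" 
  proof (cases "last x \<le> N")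
    case True then show ?thesis by (simp add: card_Diff_singleton)
  next
    case F2: False
    have "last x \<in> set x" using False by simp
    then show ?thesis using xV F2 unfolding tree_V_def by auto
  qed
  finally have "card S \<le> N + 1" unfolding S_def
    using card_insert_le_m1 by (simp add: card_insert_if)
  moreover have "card (nbrs N x) \<le> card S" by (rule card_mono[OF fS s])
  ultimately show ?thesis using finite_subset[OF s fS] by linarith
qed



lemma dep_measurable_cs:
  assumes fin: "finite F" and FV: "F \<subseteq> tree_V N"
    and dep: "\<And>\<eta> \<eta>'. (\<forall>x\<in>F. \<eta> x = \<eta>' x) \<Longrightarrow> f \<eta> = f \<eta>'"
  shows "f \<in> borel_measurable (config_space N)"
proof -
  define k where "k \<eta> = {x\<in>F. \<eta> x}" for \<eta> :: config
  have eq: "f \<eta> = (\<lambda>S. f (\<lambda>x. x \<in> S)) (k \<eta>)" for \<eta>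
    unfolding k_def by (rule dep) blast
  have kPow: "k \<eta> \<in> Pow F" for \<eta> unfolding k_def by blast
  have k: "k \<in> measurable (config_space N) (count_space (Pow F))"
  proof (rule measurable_count_space_eq_countable[THEN iffD2])
    show "countable (Pow F)" using fin by (simp add: countable_finite)
    have pre: "k -` {S} \<inter> space (config_space N) \<in> sets (config_space N)" if SF: "S \<in> Pow F" for S
    proof -
      have kS: "k \<eta> = S \<longleftrightarrow> (\<forall>x\<in>F. \<eta> x = (x \<in> S))" for \<eta>
        using SF unfolding k_def set_eq_iff by blast
      have "k -` {S} \<inter> space (config_space N) = {\<eta> \<in> space (config_space N). \<forall>x\<in>F. \<eta> x = (x \<in> S)}"
        using kS by blast
      also have "\<dots> \<in> sets (config_space N)"
      proof (rule sets.sets_Collect_finite_All[OF _ fin])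
        fix x assume "x \<in> F"
        then have xV: "x \<in> tree_V N" using FV by auto
        have "(\<lambda>\<eta>. \<eta> x) \<in> measurable (config_space N) (count_space UNIV)"
          unfolding config_space_def by (rule measurable_component_singleton[OF xV])
        then have "(\<lambda>\<eta>. \<eta> x) -` {x \<in> S} \<inter> space (config_space N) \<in> sets (config_space N)"
          by (rule measurable_sets) simp
        moreover have "(\<lambda>\<eta>. \<eta> x) -` {x \<in> S} \<inter> space (config_space N) = {\<eta> \<in> space (config_space N). \<eta> x = (x \<in> S)}"
          by blast
        ultimately show "{\<eta> \<in> space (config_space N). \<eta> x = (x \<in> S)} \<in> sets (config_space N)"
          by simp
      qed
      finally show ?thesis .
    qed
    show "k \<in> space (config_space N) \<rightarrow> Pow F \<and> (\<forall>a\<in>Pow F. k -` {a} \<inter> space (config_space N) \<in> sets (config_space N))"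
    proof (intro conjI ballI)
      show "k \<in> space (config_space N) \<rightarrow> Pow F" using kPow by blast
    qed (rule pre)
  qed
  have m: "(\<lambda>\<eta>. (\<lambda>S. f (\<lambda>x. x \<in> S)) (k \<eta>)) \<in> borel_measurable (config_space N)"
    by (rule measurable_compose[OF k]) simp
  have feq: "(\<lambda>\<eta>. (\<lambda>S. f (\<lambda>x. x \<in> S)) (k \<eta>)) = f"
    by (rule ext) (rule eq[symmetric])
  show ?thesis using m unfolding feq .
qed

lemma dep_integrable:
  fixes f :: "config \<Rightarrow> real"
  assumes fin: "finite F" and FV: "F \<subseteq> tree_V N"
    and dep: "\<And>\<eta> \<eta>'. (\<forall>x\<in>F. \<eta> x = \<eta>' x) \<Longrightarrow> f \<eta> = f \<eta>'"
    and M: "prob_space M" "sets M = sets (config_space N)"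
  shows "integrable M f"
proof -
  interpret prob_space M by fact
  define k where "k \<eta> = {x\<in>F. \<eta> x}" for \<eta> :: config
  define g where "g S = f (\<lambda>x. x \<in> S)" for S
  have eq: "f \<eta> = g (k \<eta>)" for \<eta>
    unfolding g_def by (rule dep) (auto simp: k_def)
  define B where "B = Max ((\<lambda>S. norm (g S)) ` Pow F)"
  have nb: "norm (f \<eta>) \<le> B" for \<eta>
  proof -
    have "k \<eta> \<in> Pow F" by (auto simp: k_def)
    then have "norm (g (k \<eta>)) \<le> B" unfolding B_def
      by (intro Max_ge) (use fin in simp_all)
    then show ?thesis using eq[of \<eta>] by simp
  qed
  have mcs: "f \<in> borel_measurable (config_space N)"
    by (rule dep_measurable_cs[OF fin FV]) (rule dep, assumption)
  have mm: "measurable M (borel :: real measure) = measurable (config_space N) borel"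
    by (rule measurable_cong_sets[OF M(2) refl])
  have fm: "f \<in> borel_measurable M" using mcs mm by blast
  show ?thesis
    by (rule integrable_const_bound[where B=B, OF AE_I2[OF nb] fm])
qed




definition Lop :: "nat \<Rightarrow> real \<Rightarrow> nat list set \<Rightarrow> (nat list set \<Rightarrow> real) \<Rightarrow> real" where
  "Lop N c A u = (\<Sum>x\<in>A. u (A - {x}) - u A) + c * (\<Sum>x\<in>A. \<Sum>y\<in>nbrs N x - A. u (insert y A) - u A)"

lemma choose_identity: "Suc n * ((m + n) choose Suc n) = m * ((m + n) choose n)"
proof -
  have "Suc n * ((m + n) choose Suc n) = (m + n) * ((m + n - 1) choose n)"
    by (rule binomial_absorption)
  also have "\<dots> = (m + n - n) * ((m + n) choose n)"
    by (rule binomial_absorb_comp[symmetric])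
  finally show ?thesis by simp
qed

lemma step_bound:
  fixes w w' :: "real \<Rightarrow> nat list set \<Rightarrow> real" and c T :: real
  assumes c: "c \<ge> 0" and T: "T \<ge> 0"
    and bound: "\<And>s A. s \<ge> 0 \<Longrightarrow> finite A \<Longrightarrow> A \<subseteq> tree_V N \<Longrightarrow> w s A \<le> 1"
    and wT: "\<And>A. finite A \<Longrightarrow> A \<subseteq> tree_V N \<Longrightarrow> w T A \<le> 0"
    and deriv: "\<And>s A. s \<ge> 0 \<Longrightarrow> finite A \<Longrightarrow> A \<subseteq> tree_V N \<Longrightarrow>
       ((\<lambda>s. w s A) has_real_derivative w' s A) (at s within {0..})"
    and ineq: "\<And>s A. s \<ge> 0 \<Longrightarrow> finite A \<Longrightarrow> A \<subseteq> tree_V N \<Longrightarrow> w' s A \<le> Lop N c A (w s)"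
  shows "finite A \<Longrightarrow> A \<subseteq> tree_V N \<Longrightarrow> T \<le> s \<Longrightarrow>
     w s A \<le> ((1 + c * real (N+1)) * (s - T)) ^ n * real ((card A + n - 1) choose n)"
proof (induction n arbitrary: A s)
  case 0
  then show ?case using bound[of s A] T by simp
next
  case (Suc n)
  define a where "a = 1 + c * real (N+1)"
  have a1: "a \<ge> 1" using c by (simp add: a_def)
  define m where "m = card A"
  define Q where "Q = real m + c * (\<Sum>x\<in>A. real (card (nbrs N x - A)))"
  define K where "K = real ((m + n) choose Suc n)"
  define \<phi> where "\<phi> r = (a*(r-T)) ^ Suc n * K" for r
  define \<phi>' where "\<phi>' r = real (Suc n) * a * (a*(r-T)) ^ n * K" for r
  define h where "h r = exp (Q*r) * (w r A - \<phi> r)" for r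
  define h' where "h' r = exp (Q*r) * Q * (w r A - \<phi> r) + exp (Q*r) * (w' r A - \<phi>' r)" for r
  have Q0: "Q \<ge> 0" unfolding Q_def using c by (auto intro!: add_nonneg_nonneg mult_nonneg_nonneg sum_nonneg)
  have K0: "K \<ge> 0" unfolding K_def by simp
  have d\<phi>: "(\<phi> has_real_derivative \<phi>' r) (at r within X)" for r X
  proof -
    have 1: "((\<lambda>r. a*(r-T)) has_real_derivative a) (at r within X)"
      by (auto intro!: derivative_eq_intros)
    have "(\<phi> has_real_derivative (of_nat (Suc n) * (a * (a*(r-T)) ^ (Suc n - Suc 0))) * K) (at r within X)"
      unfolding \<phi>_def by (rule DERIV_cmult_right, rule DERIV_power, rule 1)
    moreover have "(of_nat (Suc n) * (a * (a*(r-T)) ^ (Suc n - Suc 0))) * K = \<phi>' r"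
      by (simp add: \<phi>'_def)
    ultimately show ?thesis by simp
  qed
  have dh: "(h has_real_derivative h' r) (at r within {0..})" if "r \<ge> 0" for r
    unfolding h_def h'_def
    by (rule derivative_eq_intros deriv[OF that Suc.prems(1,2)] d\<phi> | simp)+
  have h'neg: "h' r \<le> 0" if r: "T < r" for r
  proof -
    define x0 where "x0 = a * (r - T)"
    have x0: "x0 \<ge> 0" using a1 r by (simp add: x0_def)
    define b where "b = x0 ^ n * real ((m + n) choose n)"
    have b0: "b \<ge> 0" using x0 by (simp add: b_def)
    have r0: "r \<ge> 0" using r T by simp
    have IH1: "w r (A - {z}) \<le> b" if z: "z \<in> A" for z
    proof -
      have "w r (A - {z}) \<le> x0 ^ n * real ((card (A - {z}) + n - 1) choose n)"
        unfolding x0_def a_def using Suc.IH[of "A - {z}" r] Suc.prems r by auto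
      also have "\<dots> \<le> b"
      proof -
        have "card (A - {z}) \<le> m" unfolding m_def using Suc.prems(1) by (simp add: card_Diff1_le)
        then show ?thesis unfolding b_def
          by (intro mult_left_mono) (use x0 in \<open>auto intro!: binomial_right_mono\<close>)
      qed
      finally show ?thesis .
    qed
    have IH2: "w r (insert y A) \<le> b" if z: "z \<in> A" and y: "y \<in> nbrs N z - A" for z y
    proof -
      have yV: "y \<in> tree_V N" using y unfolding nbrs_def by auto
      have "w r (insert y A) \<le> x0 ^ n * real ((card (insert y A) + n - 1) choose n)"
        unfolding x0_def a_def using Suc.IH[of "insert y A" r] Suc.prems r yV by auto
      also have "card (insert y A) = m + 1" using y Suc.prems by (simp add: m_def)
      finally show ?thesis by (simp add: b_def)
    qed
    have "w' r A \<le> Lop N c A (w r)" using ineq[OF r0 Suc.prems(1,2)] .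
    also have "\<dots> \<le> (\<Sum>x\<in>A. b - w r A) + c * (\<Sum>x\<in>A. \<Sum>y\<in>nbrs N x - A. b - w r A)"
      unfolding Lop_def
      by (intro add_mono sum_mono mult_left_mono c) (auto intro: IH1 IH2)
    also have "\<dots> = Q * (b - w r A)"
    proof -
      have e1: "(\<Sum>x\<in>A. \<Sum>y\<in>nbrs N x - A. b - w r A) = (\<Sum>x\<in>A. real (card (nbrs N x - A))) * (b - w r A)"
        by (simp add: sum_distrib_right)
      show ?thesis unfolding e1 by (simp add: Q_def m_def algebra_simps)
    qed
    finally have w'b: "w' r A \<le> Q * (b - w r A)" .
    have "(\<Sum>x\<in>A. real (card (nbrs N x - A))) \<le> (\<Sum>x\<in>A. real (N + 1))"
    proof (intro sum_mono)
      fix x assume "x \<in> A"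
      then have xV: "x \<in> tree_V N" using Suc.prems by auto
      have "card (nbrs N x - A) \<le> card (nbrs N x)"
        using nbrs_finite_card[OF xV] by (intro card_mono) auto
      then show "real (card (nbrs N x - A)) \<le> real (N + 1)"
        using nbrs_finite_card[OF xV] by linarith
    qed
    then have "c * (\<Sum>x\<in>A. real (card (nbrs N x - A))) \<le> c * (\<Sum>x\<in>A. real (N + 1))"
      by (rule mult_left_mono[OF _ c])
    also have "(\<Sum>x\<in>A. real (N + 1)) = real m * real (N+1)" unfolding m_def by simp
    finally have "Q \<le> real m + c * (real m * real (N+1))"
      unfolding Q_def by linarith
    also have "\<dots> = a * real m" unfolding a_def by (simp add: algebra_simps)
    finally have Qa: "Q \<le> a * real m" .
    have "\<phi>' r = a * real m * b"
    proof -
      have "real (Suc n) * K = real m * real ((m + n) choose n)"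
        unfolding K_def using choose_identity[of n m] by (metis of_nat_mult)
      have "\<phi>' r = a * x0^n * (real (Suc n) * K)" unfolding \<phi>'_def x0_def by (simp only: mult_ac)
      also have "\<dots> = a * x0^n * (real m * real ((m + n) choose n))" using \<open>real (Suc n) * K = _\<close> by simp
      also have "\<dots> = a * real m * b" by (simp add: b_def mult_ac)
      finally show ?thesis .
    qed
    then have qb: "Q * b \<le> \<phi>' r" using mult_right_mono[OF Qa b0] by simp
    have p0: "\<phi> r \<ge> 0" unfolding \<phi>_def using a1 r K0 by simp
    have q0: "Q * \<phi> r \<ge> 0" using Q0 p0 by simp
    have e1: "Q * (w r A - \<phi> r) = Q * w r A - Q * \<phi> r" by (simp add: right_diff_distrib)
    have e2: "Q * (b - w r A) = Q * b - Q * w r A" by (simp add: right_diff_distrib)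
    have "Q * (w r A - \<phi> r) + (w' r A - \<phi>' r) \<le> 0"
      unfolding e1 using w'b[unfolded e2] qb q0 by linarith
    then have "exp (Q*r) * (Q * (w r A - \<phi> r) + (w' r A - \<phi>' r)) \<le> 0"
      by (rule mult_nonneg_nonpos[OF exp_ge_zero])
    moreover have "h' r = exp (Q*r) * (Q * (w r A - \<phi> r) + (w' r A - \<phi>' r))"
      unfolding h'_def by (simp only: distrib_left mult.assoc)
    ultimately show ?thesis by simp
  qed
  have "h s \<le> h T"
  proof (rule DERIV_nonpos_imp_decreasing_open[of T s h])
    show "T \<le> s" using Suc.prems by simp
    fix x assume x: "T < x" "x < s"
    have "(h has_real_derivative h' x) (at x within {0<..})"
      by (rule has_field_derivative_subset[OF dh]) (use x T in auto)
    moreover have "at x within {0<..} = at x"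
      by (rule at_within_open) (use x T in auto)
    ultimately have "(h has_real_derivative h' x) (at x)"
      by simp
    then show "\<exists>y. (h has_real_derivative y) (at x) \<and> y \<le> 0" using h'neg[OF x(1)] by blast
  next
    have cont: "continuous (at r within {0..}) h" if "r \<ge> 0" for r
      using DERIV_continuous[OF dh[OF that]] .
    have "continuous_on {0..} h" unfolding continuous_on_eq_continuous_within
      using cont by blast
    then show "continuous_on {T..s} h" by (rule continuous_on_subset) (use T in auto)
  qed
  also have "h T \<le> 0"
  proof -
    have "\<phi> T = 0" by (simp add: \<phi>_def)
    then have "h T = exp (Q*T) * w T A" by (simp add: h_def)
    then show ?thesis using mult_nonneg_nonpos[OF exp_ge_zero wT[OF Suc.prems(1,2)]] by simp
  qed
  finally have "exp (Q * s) * (w s A - \<phi> s) \<le> 0" by (simp add: h_def)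
  then have ws: "w s A - \<phi> s \<le> 0" by (meson exp_gt_zero not_le mult_pos_pos)
  have e: "\<phi> s = (a*(s-T))^Suc n * real ((card A + Suc n - 1) choose Suc n)"
    by (simp add: \<phi>_def K_def m_def)
  show ?case using ws e[unfolded a_def] by linarith
qed

lemma geom_bound:
  fixes x :: real
  assumes "0 \<le> x" "x \<le> 1/4"
  shows "x ^ n * real ((m + n - 1) choose n) \<le> 2^m * (1/2)^n"
proof -
  have "real ((m + n - 1) choose n) \<le> 2 ^ (m + n - 1)"
    using binomial_le_pow2[of "m + n - 1" n] by (metis of_nat_le_iff of_nat_numeral of_nat_power)
  also have "(2::real) ^ (m + n - 1) \<le> 2 ^ (m + n)" by (rule power_increasing) auto
  finally have C: "real ((m + n - 1) choose n) \<le> 2 ^ (m + n)" .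
  have "x ^ n * real ((m + n - 1) choose n) \<le> (1/4) ^ n * 2 ^ (m + n)"
    by (rule mult_mono[OF power_mono C]) (use assms in auto)
  also have "(1/4::real) ^ n * 2 ^ (m + n) = 2^m * ((1/4) ^ n * 2 ^ n)"
    by (simp add: power_add)
  also have "(1/4::real) ^ n * 2 ^ n = (1/2)^n"
    by (simp add: power_mult_distrib[symmetric])
  finally show ?thesis .
qed

lemma compare:
  fixes w w' :: "real \<Rightarrow> nat list set \<Rightarrow> real" and c :: real
  assumes c: "c \<ge> 0"
    and bound: "\<And>s A. s \<ge> 0 \<Longrightarrow> finite A \<Longrightarrow> A \<subseteq> tree_V N \<Longrightarrow> w s A \<le> 1"
    and w0: "\<And>A. finite A \<Longrightarrow> A \<subseteq> tree_V N \<Longrightarrow> w 0 A \<le> 0"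
    and deriv: "\<And>s A. s \<ge> 0 \<Longrightarrow> finite A \<Longrightarrow> A \<subseteq> tree_V N \<Longrightarrow>
       ((\<lambda>s. w s A) has_real_derivative w' s A) (at s within {0..})"
    and ineq: "\<And>s A. s \<ge> 0 \<Longrightarrow> finite A \<Longrightarrow> A \<subseteq> tree_V N \<Longrightarrow> w' s A \<le> Lop N c A (w s)"
    and s: "s \<ge> 0" and A: "finite A" "A \<subseteq> tree_V N"
  shows "w s A \<le> 0"
proof -
  define a where "a = 1 + c * real (N+1)"
  have a1: "a \<ge> 1" using c by (simp add: a_def)
  define \<delta> where "\<delta> = 1 / (4 * a)"
  have \<delta>0: "\<delta> > 0" using a1 by (simp add: \<delta>_def)
  have P: "\<forall>s A. 0 \<le> s \<and> s \<le> real k * \<delta> \<and> finite A \<and> A \<subseteq> tree_V N \<longrightarrow> w s A \<le> 0" for k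
  proof (induction k)
    case 0
    then show ?case using w0 by auto
  next
    case (Suc k)
    show ?case
    proof (intro allI impI)
      fix s A assume H: "0 \<le> s \<and> s \<le> real (Suc k) * \<delta> \<and> finite A \<and> A \<subseteq> tree_V N"
      show "w s A \<le> 0"
      proof (cases "s \<le> real k * \<delta>")
        case True then show ?thesis using Suc.IH H by blast
      next
        case False
        define T where "T = real k * \<delta>"
        have T0: "T \<ge> 0" using \<delta>0 by (simp add: T_def)
        have Ts: "T \<le> s" using False by (simp add: T_def)
        have sT: "s - T \<le> \<delta>" using H by (simp add: T_def algebra_simps)
        have wT: "w T B \<le> 0" if "finite B" "B \<subseteq> tree_V N" for B
          using Suc.IH that T0 by (auto simp: T_def)
        have x0: "0 \<le> a * (s - T)" "a * (s - T) \<le> 1/4"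
        proof -
          show "0 \<le> a * (s - T)" using a1 Ts by simp
          have "a * (s - T) \<le> a * \<delta>" using sT a1 by (simp add: mult_left_mono)
          also have "a * \<delta> = 1/4" using a1 by (simp add: \<delta>_def)
          finally show "a * (s - T) \<le> 1/4" .
        qed
        have bnd: "w s A \<le> 2 ^ card A * (1/2) ^ n" for n
        proof -
          have "w s A \<le> (a * (s - T)) ^ n * real ((card A + n - 1) choose n)"
            unfolding a_def
            by (rule step_bound[OF c T0 bound wT deriv ineq]) (use H Ts in auto)
          also have "\<dots> \<le> 2 ^ card A * (1/2) ^ n" by (rule geom_bound[OF x0])
          finally show ?thesis .
        qed
        have lim: "(\<lambda>n. 2 ^ card A * (1/2::real) ^ n) \<longlonglongrightarrow> 0"
          by (intro tendsto_mult_right_zero LIMSEQ_power_zero) auto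
        show ?thesis by (rule LIMSEQ_le_const[OF lim]) (use bnd in auto)
      qed
    qed
  qed
  obtain k :: nat where k: "s / \<delta> \<le> real k" using real_arch_simple by blast
  then have "s \<le> real k * \<delta>" using \<delta>0 by (simp add: divide_le_eq)
  then show ?thesis using P[of k] s A by blast
qed




definition Z :: "nat list set \<Rightarrow> config \<Rightarrow> real" where
  "Z B \<eta> = (if \<forall>x\<in>B. \<not> \<eta> x then 1 else 0)"

lemma sum_Z_case1:
  assumes "finite S" "S \<inter> A = {}" "\<forall>z\<in>A. \<not> \<eta> z"
  shows "(\<Sum>y\<in>S. Z (insert y A) \<eta> - Z A \<eta>) = - real (card {y\<in>S. \<eta> y})"
proof -
  have "(\<Sum>y\<in>S. Z (insert y A) \<eta> - Z A \<eta>) = (\<Sum>y\<in>S. - of_bool (\<eta> y))"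
    by (rule sum.cong) (use assms in \<open>auto simp: Z_def\<close>)
  also have "\<dots> = - real (card (S \<inter> {y. \<eta> y}))"
    using assms(1) by (simp add: sum_negf)
  also have "S \<inter> {y. \<eta> y} = {y\<in>S. \<eta> y}" by auto
  finally show ?thesis .
qed

lemma term_cp:
  assumes xA: "x \<in> A" and xV: "x \<in> tree_V N"
  shows "cp_rate N lam \<eta> x * (Z A (flip \<eta> x) - Z A \<eta>) =
    (Z (A - {x}) \<eta> - Z A \<eta>) + lam / real (N+1) * (\<Sum>y\<in>nbrs N x - A. Z (insert y A) \<eta> - Z A \<eta>)"
proof -
  have fin: "finite (nbrs N x - A)" using nbrs_finite_card[OF xV] by simp
  consider (c1) "\<forall>z\<in>A. \<not> \<eta> z" | (c2) "\<forall>z\<in>A-{x}. \<not> \<eta> z" "\<eta> x" | (c3) "\<exists>z\<in>A-{x}. \<eta> z"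
    by blast
  then show ?thesis
  proof cases
    case c1
    have s: "(\<Sum>y\<in>nbrs N x - A. Z (insert y A) \<eta> - Z A \<eta>) = - real (card {y\<in>nbrs N x - A. \<eta> y})"
      by (rule sum_Z_case1[OF fin]) (use c1 in auto)
    have e: "{y\<in>nbrs N x - A. \<eta> y} = {y\<in>nbrs N x. \<eta> y}" using c1 by auto
    have "\<not> \<eta> x" using c1 xA by auto
    moreover have "Z A (flip \<eta> x) = 0" using xA c1 by (auto simp: Z_def flip_def)
    moreover have "Z A \<eta> = 1" "Z (A - {x}) \<eta> = 1" using c1 by (auto simp: Z_def)
    ultimately show ?thesis unfolding s e cp_rate_def by simp
  next
    case c2
    have "Z A (flip \<eta> x) = 1" using c2 by (auto simp: Z_def flip_def)
    moreover have "Z A \<eta> = 0" "Z (A - {x}) \<eta> = 1" using c2 xA by (auto simp: Z_def)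
    moreover have "Z (insert y A) \<eta> = 0" for y using c2 xA by (auto simp: Z_def)
    ultimately show ?thesis using c2 unfolding cp_rate_def by simp
  next
    case c3
    have "Z A (flip \<eta> x) = 0" using c3 by (auto simp: Z_def flip_def)
    moreover have "Z A \<eta> = 0" "Z (A - {x}) \<eta> = 0" using c3 by (auto simp: Z_def)
    moreover have "Z (insert y A) \<eta> = 0" for y using c3 by (auto simp: Z_def)
    ultimately show ?thesis by simp
  qed
qed

lemma term_bv:
  assumes xA: "x \<in> A" and xV: "x \<in> tree_V N"
  shows "bv_rate N lam 1 \<eta> x * (Z A (flip \<eta> x) - Z A \<eta>) \<le>
    (Z (A - {x}) \<eta> - Z A \<eta>) + lam / real (N+1) * (\<Sum>y\<in>nbrs N x - A. Z (insert y A) \<eta> - Z A \<eta>)"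
proof -
  have fin: "finite (nbrs N x - A)" using nbrs_finite_card[OF xV] by simp
  consider (c1) "\<forall>z\<in>A. \<not> \<eta> z" | (c2) "\<forall>z\<in>A-{x}. \<not> \<eta> z" "\<eta> x" | (c3) "\<exists>z\<in>A-{x}. \<eta> z"
    by blast
  then show ?thesis
  proof cases
    case c1
    have s: "(\<Sum>y\<in>nbrs N x - A. Z (insert y A) \<eta> - Z A \<eta>) = - real (card {y\<in>nbrs N x - A. \<eta> y})"
      by (rule sum_Z_case1[OF fin]) (use c1 in auto)
    have e: "{y\<in>nbrs N x - A. \<eta> y} = {y\<in>nbrs N x. \<eta> y}" using c1 by auto
    have "\<not> \<eta> x" using c1 xA by auto
    moreover have "Z A (flip \<eta> x) = 0" using xA c1 by (auto simp: Z_def flip_def)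
    moreover have "Z A \<eta> = 1" "Z (A - {x}) \<eta> = 1" using c1 by (auto simp: Z_def)
    ultimately show ?thesis unfolding s e bv_rate_def by simp
  next
    case c2
    have "card {y\<in>nbrs N x. \<not> \<eta> y} \<le> card (nbrs N x)"
      using nbrs_finite_card[OF xV] by (intro card_mono) auto
    then have "real (card {y\<in>nbrs N x. \<not> \<eta> y}) \<le> real (N + 1)"
      using nbrs_finite_card[OF xV] by linarith
    then have r: "1 / real (N + 1) * real (card {y\<in>nbrs N x. \<not> \<eta> y}) \<le> 1"
      by (simp add: field_simps)
    have "Z A (flip \<eta> x) = 1" using c2 by (auto simp: Z_def flip_def)
    moreover have "Z A \<eta> = 0" "Z (A - {x}) \<eta> = 1" using c2 xA by (auto simp: Z_def)
    moreover have "Z (insert y A) \<eta> = 0" for y using c2 xA by (auto simp: Z_def)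
    ultimately show ?thesis using c2 r unfolding bv_rate_def by simp
  next
    case c3
    have "Z A (flip \<eta> x) = 0" using c3 by (auto simp: Z_def flip_def)
    moreover have "Z A \<eta> = 0" "Z (A - {x}) \<eta> = 0" using c3 by (auto simp: Z_def)
    moreover have "Z (insert y A) \<eta> = 0" for y using c3 by (auto simp: Z_def)
    ultimately show ?thesis by simp
  qed
qed


lemma Z_dep: "(\<forall>x\<in>B. \<eta> x = \<eta>' x) \<Longrightarrow> Z B \<eta> = Z B \<eta>'"
  unfolding Z_def by auto

lemma Z_integrable:
  assumes "finite B" "B \<subseteq> tree_V N" "prob_space M" "sets M = sets (config_space N)"
  shows "integrable M (Z B)"
  by (rule dep_integrable[OF assms(1,2) _ assms(3,4)]) (rule Z_dep)

lemma Z_measure: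
  "(\<integral>\<eta>. Z B \<eta> \<partial>M) = measure M {\<eta> \<in> space M. \<forall>x\<in>B. \<not> \<eta> x}"
proof -
  have "(\<integral>\<eta>. Z B \<eta> \<partial>M) = (\<integral>\<eta>. indicator {\<eta> \<in> space M. \<forall>x\<in>B. \<not> \<eta> x} \<eta> \<partial>M)"
    by (rule Bochner_Integration.integral_cong) (auto simp: Z_def indicator_def)
  also have "\<dots> = measure M ({\<eta> \<in> space M. \<forall>x\<in>B. \<not> \<eta> x} \<inter> space M)"
    by (rule Bochner_Integration.integral_indicator)
  also have "{\<eta> \<in> space M. \<forall>x\<in>B. \<not> \<eta> x} \<inter> space M = {\<eta> \<in> space M. \<forall>x\<in>B. \<not> \<eta> x}" by auto
  finally show ?thesis .
qed

lemma gen_cp: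
  assumes "A \<subseteq> tree_V N"
  shows "gen (cp_rate N lam) A (Z A) \<eta> = Lop N (lam / real (N+1)) A (\<lambda>B. Z B \<eta>)"
proof -
  have "gen (cp_rate N lam) A (Z A) \<eta> = (\<Sum>x\<in>A. (Z (A - {x}) \<eta> - Z A \<eta>) +
      lam / real (N+1) * (\<Sum>y\<in>nbrs N x - A. Z (insert y A) \<eta> - Z A \<eta>))"
    unfolding gen_def by (rule sum.cong[OF refl] term_cp)+ (use assms in auto)
  also have "\<dots> = Lop N (lam / real (N+1)) A (\<lambda>B. Z B \<eta>)"
    unfolding Lop_def by (simp add: sum.distrib sum_distrib_left)
  finally show ?thesis .
qed

lemma gen_bv:
  assumes "A \<subseteq> tree_V N"
  shows "gen (bv_rate N lam 1) A (Z A) \<eta> \<le> Lop N (lam / real (N+1)) A (\<lambda>B. Z B \<eta>)"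
proof -
  have "gen (bv_rate N lam 1) A (Z A) \<eta> \<le> (\<Sum>x\<in>A. (Z (A - {x}) \<eta> - Z A \<eta>) +
      lam / real (N+1) * (\<Sum>y\<in>nbrs N x - A. Z (insert y A) \<eta> - Z A \<eta>))"
    unfolding gen_def by (rule sum_mono term_bv)+ (use assms in auto)
  also have "\<dots> = Lop N (lam / real (N+1)) A (\<lambda>B. Z B \<eta>)"
    unfolding Lop_def by (simp add: sum.distrib sum_distrib_left)
  finally show ?thesis .
qed

lemma Lop_diff: "Lop N c A u - Lop N c A v = Lop N c A (\<lambda>B. u B - v B)"
proof -
  have 1: "(\<Sum>x\<in>A. (u (A-{x}) - v (A-{x})) - (u A - v A)) =
      (\<Sum>x\<in>A. u (A-{x}) - u A) - (\<Sum>x\<in>A. v (A-{x}) - v A)"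
    unfolding sum_subtractf[symmetric] by (intro sum.cong) (auto simp: algebra_simps)
  have 2: "(\<Sum>x\<in>A. \<Sum>y\<in>nbrs N x - A. (u (insert y A) - v (insert y A)) - (u A - v A)) =
      (\<Sum>x\<in>A. \<Sum>y\<in>nbrs N x - A. u (insert y A) - u A) - (\<Sum>x\<in>A. \<Sum>y\<in>nbrs N x - A. v (insert y A) - v A)"
    unfolding sum_subtractf[symmetric] by (intro sum.cong) (auto simp: algebra_simps)
  show ?thesis unfolding Lop_def 1 2 by (simp add: right_diff_distrib)
qed

lemma integral_Lop:
  assumes M: "prob_space M" "sets M = sets (config_space N)"
    and A: "finite A" "A \<subseteq> tree_V N"
  shows "(\<integral>\<eta>. Lop N c A (\<lambda>B. Z B \<eta>) \<partial>M) = Lop N c A (\<lambda>B. \<integral>\<eta>. Z B \<eta> \<partial>M)"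
proof -
  have ZI: "integrable M (Z B)" if "finite B" "B \<subseteq> tree_V N" for B
    using Z_integrable[OF that M] .
  have IA: "integrable M (Z A)" using ZI A by blast
  have I1: "integrable M (Z (A - {x}))" for x using ZI A by auto
  have I2: "integrable M (Z (insert y A))" if "y \<in> nbrs N x" for x y
    using ZI A that nbrs_sub by blast
  have J1: "integrable M (\<lambda>\<eta>. \<Sum>x\<in>A. Z (A - {x}) \<eta> - Z A \<eta>)"
    using I1 IA by (intro Bochner_Integration.integrable_sum Bochner_Integration.integrable_diff) auto
  have J2: "integrable M (\<lambda>\<eta>. \<Sum>x\<in>A. \<Sum>y\<in>nbrs N x - A. Z (insert y A) \<eta> - Z A \<eta>)"
    using I2 IA by (intro Bochner_Integration.integrable_sum Bochner_Integration.integrable_diff) auto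
  have e1: "(\<integral>\<eta>. (\<Sum>x\<in>A. Z (A - {x}) \<eta> - Z A \<eta>) \<partial>M) =
      (\<Sum>x\<in>A. (\<integral>\<eta>. Z (A - {x}) \<eta> \<partial>M) - (\<integral>\<eta>. Z A \<eta> \<partial>M))"
  proof -
    have "(\<integral>\<eta>. (\<Sum>x\<in>A. Z (A - {x}) \<eta> - Z A \<eta>) \<partial>M) = (\<Sum>x\<in>A. \<integral>\<eta>. Z (A - {x}) \<eta> - Z A \<eta> \<partial>M)"
      by (rule Bochner_Integration.integral_sum) (use I1 IA in auto)
    also have "\<dots> = (\<Sum>x\<in>A. (\<integral>\<eta>. Z (A - {x}) \<eta> \<partial>M) - (\<integral>\<eta>. Z A \<eta> \<partial>M))"
      by (rule sum.cong[OF refl], rule Bochner_Integration.integral_diff[OF I1 IA])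
    finally show ?thesis .
  qed
  have e2: "(\<integral>\<eta>. (\<Sum>x\<in>A. \<Sum>y\<in>nbrs N x - A. Z (insert y A) \<eta> - Z A \<eta>) \<partial>M) =
      (\<Sum>x\<in>A. \<Sum>y\<in>nbrs N x - A. (\<integral>\<eta>. Z (insert y A) \<eta> \<partial>M) - (\<integral>\<eta>. Z A \<eta> \<partial>M))"
  proof -
    have "(\<integral>\<eta>. (\<Sum>x\<in>A. \<Sum>y\<in>nbrs N x - A. Z (insert y A) \<eta> - Z A \<eta>) \<partial>M) =
        (\<Sum>x\<in>A. \<integral>\<eta>. (\<Sum>y\<in>nbrs N x - A. Z (insert y A) \<eta> - Z A \<eta>) \<partial>M)"
      by (rule Bochner_Integration.integral_sum) (use I2 IA in \<open>auto intro!: Bochner_Integration.integrable_sum Bochner_Integration.integrable_diff\<close>)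
    also have "\<dots> = (\<Sum>x\<in>A. \<Sum>y\<in>nbrs N x - A. \<integral>\<eta>. Z (insert y A) \<eta> - Z A \<eta> \<partial>M)"
      by (rule sum.cong[OF refl], rule Bochner_Integration.integral_sum) (use I2 IA in auto)
    also have "\<dots> = (\<Sum>x\<in>A. \<Sum>y\<in>nbrs N x - A. (\<integral>\<eta>. Z (insert y A) \<eta> \<partial>M) - (\<integral>\<eta>. Z A \<eta> \<partial>M))"
      by (rule sum.cong[OF refl], rule sum.cong[OF refl], rule Bochner_Integration.integral_diff) (use I2 IA in auto)
    finally show ?thesis .
  qed
  have "(\<integral>\<eta>. Lop N c A (\<lambda>B. Z B \<eta>) \<partial>M) =
     (\<integral>\<eta>. (\<Sum>x\<in>A. Z (A - {x}) \<eta> - Z A \<eta>) \<partial>M) +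
     c * (\<integral>\<eta>. (\<Sum>x\<in>A. \<Sum>y\<in>nbrs N x - A. Z (insert y A) \<eta> - Z A \<eta>) \<partial>M)"
    unfolding Lop_def using J1 J2 by simp
  also have "\<dots> = Lop N c A (\<lambda>B. \<integral>\<eta>. Z B \<eta> \<partial>M)"
    unfolding e1 e2 Lop_def ..
  finally show ?thesis .
qed

lemma gen_bv_dep:
  assumes "\<forall>x\<in>A \<union> (\<Union>x\<in>A. nbrs N x). \<eta> x = \<eta>' x"
  shows "gen (bv_rate N lam 1) A (Z A) \<eta> = gen (bv_rate N lam 1) A (Z A) \<eta>'"
proof -
  have "bv_rate N lam 1 \<eta> x * (Z A (flip \<eta> x) - Z A \<eta>) = bv_rate N lam 1 \<eta>' x * (Z A (flip \<eta>' x) - Z A \<eta>')"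
    if x: "x \<in> A" for x
  proof -
    have "{y \<in> nbrs N x. \<not> \<eta> y} = {y \<in> nbrs N x. \<not> \<eta>' y}" "{y \<in> nbrs N x. \<eta> y} = {y \<in> nbrs N x. \<eta>' y}"
      using \<open>\<forall>x\<in>_. \<eta> x = \<eta>' x\<close> x by auto
    moreover have "\<eta> x = \<eta>' x" using \<open>\<forall>x\<in>_. \<eta> x = \<eta>' x\<close> x by auto
    ultimately have "bv_rate N lam 1 \<eta> x = bv_rate N lam 1 \<eta>' x" unfolding bv_rate_def by simp
    moreover have "Z A (flip \<eta> x) = Z A (flip \<eta>' x)"
      by (rule Z_dep) (use \<open>\<forall>x\<in>_. \<eta> x = \<eta>' x\<close> in \<open>auto simp: flip_def\<close>)
    moreover have "Z A \<eta> = Z A \<eta>'"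
      by (rule Z_dep) (use \<open>\<forall>x\<in>_. \<eta> x = \<eta>' x\<close> in auto)
    ultimately show ?thesis by simp
  qed
  then show ?thesis unfolding gen_def by (rule sum.cong[OF refl])
qed

lemma Lop_Z_dep:
  assumes that: "\<forall>x\<in>A \<union> (\<Union>x\<in>A. nbrs N x). \<eta> x = \<eta>' x"
  shows "Lop N c A (\<lambda>B. Z B \<eta>) = Lop N c A (\<lambda>B. Z B \<eta>')"
proof -
  have a: "Z A \<eta> = Z A \<eta>'" by (rule Z_dep) (use that in auto)
  have b: "Z (A - {x}) \<eta> = Z (A - {x}) \<eta>'" for x by (rule Z_dep) (use that in auto)
  have c: "Z (insert y A) \<eta> = Z (insert y A) \<eta>'" if "x \<in> A" "y \<in> nbrs N x" for x y
    by (rule Z_dep) (use that \<open>\<forall>x\<in>_. \<eta> x = \<eta>' x\<close> in auto)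
  show ?thesis unfolding Lop_def a b using c by (auto intro!: sum.cong)
qed

lemma finite_union_nbrs:
  assumes "finite A" "A \<subseteq> tree_V N"
  shows "finite (A \<union> (\<Union>x\<in>A. nbrs N x))" "A \<union> (\<Union>x\<in>A. nbrs N x) \<subseteq> tree_V N"
proof -
  show "finite (A \<union> (\<Union>x\<in>A. nbrs N x))"
    using assms nbrs_finite_card nbrs_sub by auto
  show "A \<union> (\<Union>x\<in>A. nbrs N x) \<subseteq> tree_V N"
    using assms(2) nbrs_sub[of N] by blast
qed

lemma finite_case:
  fixes N :: nat and lam p :: real
    and \<mu>BV \<mu>CP :: "real \<Rightarrow> config measure"
  assumes lam: "lam > 1"
    and BV: "spin_system_law N (bv_rate N lam 1) (bern_product N p) \<mu>BV"
    and CP: "spin_system_law N (cp_rate N lam) (bern_product N p) \<mu>CP"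
    and A: "finite A" "A \<subseteq> tree_V N" and t: "t \<ge> 0"
  shows "(\<integral>\<eta>. Z A \<eta> \<partial>\<mu>BV t) \<le> (\<integral>\<eta>. Z A \<eta> \<partial>\<mu>CP t)"
proof -
  define c where "c = lam / real (N+1)"
  have c0: "c \<ge> 0" using lam by (simp add: c_def)
  note BV' = BV[unfolded spin_system_law_def]
  note CP' = CP[unfolded spin_system_law_def]
  have PB: "prob_space (\<mu>BV s)" "sets (\<mu>BV s) = sets (config_space N)" if "s \<ge> 0" for s :: real
    using BV'[THEN conjunct1, rule_format, OF that] by auto
  have PC: "prob_space (\<mu>CP s)" "sets (\<mu>CP s) = sets (config_space N)" if "s \<ge> 0" for s :: real
    using CP'[THEN conjunct1, rule_format, OF that] by auto
  have B0: "\<mu>BV 0 = \<mu>CP 0"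
    using BV'[THEN conjunct2, THEN conjunct1] CP'[THEN conjunct2, THEN conjunct1] by simp
  note lawB = BV'[THEN conjunct2, THEN conjunct2, rule_format]
  note lawC = CP'[THEN conjunct2, THEN conjunct2, rule_format]
  have cyl: "cylinder_on N B (Z B)" if "finite B" "B \<subseteq> tree_V N" for B
    unfolding cylinder_on_def using that Z_dep by blast
  define w where "w s B = (\<integral>\<eta>. Z B \<eta> \<partial>\<mu>BV s) - (\<integral>\<eta>. Z B \<eta> \<partial>\<mu>CP s)" for s B
  define w' where "w' s B = (\<integral>\<eta>. gen (bv_rate N lam 1) B (Z B) \<eta> \<partial>\<mu>BV s)
      - (\<integral>\<eta>. gen (cp_rate N lam) B (Z B) \<eta> \<partial>\<mu>CP s)" for s B
  have "w t A \<le> 0"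
  proof (rule compare[OF c0 _ _ _ _ t A])
    fix s :: real and B assume s: "s \<ge> 0" and B: "finite B" "B \<subseteq> tree_V N"
    have "(\<integral>\<eta>. Z B \<eta> \<partial>\<mu>BV s) \<le> 1" unfolding Z_measure
      by (rule prob_space.prob_le_1[OF PB(1)[OF s]])
    moreover have "(\<integral>\<eta>. Z B \<eta> \<partial>\<mu>CP s) \<ge> 0" unfolding Z_measure
      by (rule measure_nonneg)
    ultimately show "w s B \<le> 1" unfolding w_def by linarith
  next
    fix B show "w 0 B \<le> 0" unfolding w_def B0 by simp
  next
    fix s :: real and B assume s: "s \<ge> 0" and B: "finite B" "B \<subseteq> tree_V N"
    have dB: "((\<lambda>s. \<integral>\<eta>. Z B \<eta> \<partial>\<mu>BV s) has_real_derivative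
        (\<integral>\<eta>. gen (bv_rate N lam 1) B (Z B) \<eta> \<partial>\<mu>BV s)) (at s within {0..})"
      by (rule lawB[OF conjI[OF cyl[OF B] s]])
    have dC: "((\<lambda>s. \<integral>\<eta>. Z B \<eta> \<partial>\<mu>CP s) has_real_derivative
        (\<integral>\<eta>. gen (cp_rate N lam) B (Z B) \<eta> \<partial>\<mu>CP s)) (at s within {0..})"
      by (rule lawC[OF conjI[OF cyl[OF B] s]])
    show "((\<lambda>s. w s B) has_real_derivative w' s B) (at s within {0..})"
      unfolding w_def w'_def by (rule DERIV_diff[OF dB dC])
  next
    fix s :: real and B assume s: "s \<ge> 0" and B: "finite B" "B \<subseteq> tree_V N"
    have eC: "(\<integral>\<eta>. gen (cp_rate N lam) B (Z B) \<eta> \<partial>\<mu>CP s) = Lop N c B (\<lambda>B'. \<integral>\<eta>. Z B' \<eta> \<partial>\<mu>CP s)"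
    proof -
      have "(\<integral>\<eta>. gen (cp_rate N lam) B (Z B) \<eta> \<partial>\<mu>CP s) = (\<integral>\<eta>. Lop N c B (\<lambda>B'. Z B' \<eta>) \<partial>\<mu>CP s)"
        unfolding c_def gen_cp[OF B(2)] ..
      also have "\<dots> = Lop N c B (\<lambda>B'. \<integral>\<eta>. Z B' \<eta> \<partial>\<mu>CP s)"
        by (rule integral_Lop[OF PC[OF s] B])
      finally show ?thesis .
    qed
    have eB: "(\<integral>\<eta>. gen (bv_rate N lam 1) B (Z B) \<eta> \<partial>\<mu>BV s) \<le> Lop N c B (\<lambda>B'. \<integral>\<eta>. Z B' \<eta> \<partial>\<mu>BV s)"
    proof -
      have "(\<integral>\<eta>. gen (bv_rate N lam 1) B (Z B) \<eta> \<partial>\<mu>BV s) \<le> (\<integral>\<eta>. Lop N c B (\<lambda>B'. Z B' \<eta>) \<partial>\<mu>BV s)"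
      proof (rule Bochner_Integration.integral_mono)
        show "integrable (\<mu>BV s) (gen (bv_rate N lam 1) B (Z B))"
          by (rule dep_integrable[OF finite_union_nbrs[OF B] _ PB[OF s]]) (rule gen_bv_dep)
        show "integrable (\<mu>BV s) (\<lambda>\<eta>. Lop N c B (\<lambda>B'. Z B' \<eta>))"
          by (rule dep_integrable[OF finite_union_nbrs[OF B] _ PB[OF s]]) (rule Lop_Z_dep)
        show "gen (bv_rate N lam 1) B (Z B) \<eta> \<le> Lop N c B (\<lambda>B'. Z B' \<eta>)" for \<eta>
          unfolding c_def by (rule gen_bv[OF B(2)])
      qed
      also have "\<dots> = Lop N c B (\<lambda>B'. \<integral>\<eta>. Z B' \<eta> \<partial>\<mu>BV s)"
        by (rule integral_Lop[OF PB[OF s] B])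
      finally show ?thesis .
    qed
    have L: "Lop N c B (w s) = Lop N c B (\<lambda>B'. \<integral>\<eta>. Z B' \<eta> \<partial>\<mu>BV s) - Lop N c B (\<lambda>B'. \<integral>\<eta>. Z B' \<eta> \<partial>\<mu>CP s)"
      unfolding w_def by (rule Lop_diff[symmetric])
    show "w' s B \<le> Lop N c B (w s)"
      unfolding w'_def L using eB eC by linarith
  qed
  then show ?thesis unfolding w_def by simp
qed

lemma S_sets:
  assumes "finite B" "B \<subseteq> tree_V N" "sets M = sets (config_space N)"
  shows "{\<eta> \<in> space M. \<forall>x\<in>B. \<not> \<eta> x} \<in> sets M"
proof -
  have mcs: "Z B \<in> borel_measurable (config_space N)"
    by (rule dep_measurable_cs[OF assms(1,2)]) (rule Z_dep)
  have mm: "measurable M (borel :: real measure) = measurable (config_space N) borel"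
    by (rule measurable_cong_sets[OF assms(3) refl])
  have "Z B \<in> borel_measurable M" using mcs mm by blast
  then have "Z B -` {1} \<inter> space M \<in> sets M" by (rule measurable_sets) simp
  moreover have "Z B -` {1} \<inter> space M = {\<eta> \<in> space M. \<forall>x\<in>B. \<not> \<eta> x}"
    by (auto simp: Z_def split: if_splits)
  ultimately show ?thesis by simp
qed

lemma lim_meas:
  assumes M: "prob_space M" "sets M = sets (config_space N)"
    and A: "A \<subseteq> tree_V N" "A \<noteq> {}"
  shows "(\<lambda>n. measure M {\<eta> \<in> space M. \<forall>x\<in>from_nat_into A ` {..<n}. \<not> \<eta> x})
     \<longlonglongrightarrow> measure M {\<eta> \<in> space M. \<forall>x\<in>A. \<not> \<eta> x}"
proof -
  interpret prob_space M by (rule M(1))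
  have cA: "countable A" by (rule countable_subset[OF subset_UNIV]) simp
  define S where "S n = {\<eta> \<in> space M. \<forall>x\<in>from_nat_into A ` {..<n}. \<not> \<eta> x}" for n
  have sub: "from_nat_into A ` {..<n} \<subseteq> tree_V N" for n
    using from_nat_into[OF A(2)] A(1) by blast
  have Ssets: "range S \<subseteq> sets M"
    unfolding S_def using S_sets[OF _ sub M(2)] by blast
  have dec: "decseq S"
    unfolding decseq_def S_def by auto
  have "(\<lambda>n. measure M (S n)) \<longlonglongrightarrow> measure M (\<Inter>n. S n)"
    by (rule finite_Lim_measure_decseq[OF Ssets dec])
  moreover have "(\<Inter>n. S n) = {\<eta> \<in> space M. \<forall>x\<in>A. \<not> \<eta> x}"
  proof
    show "(\<Inter>n. S n) \<subseteq> {\<eta> \<in> space M. \<forall>x\<in>A. \<not> \<eta> x}"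
    proof
      fix \<eta> assume h: "\<eta> \<in> (\<Inter>n. S n)"
      have "\<eta> \<in> space M" using h unfolding S_def by blast
      moreover have "\<not> \<eta> x" if x: "x \<in> A" for x
      proof -
        have "x \<in> range (from_nat_into A)" using range_from_nat_into[OF A(2) cA] x by simp
        then obtain k where k: "x = from_nat_into A k" by blast
        have "\<eta> \<in> S (Suc k)" using h by blast
        then show ?thesis unfolding S_def k by auto
      qed
      ultimately show "\<eta> \<in> {\<eta> \<in> space M. \<forall>x\<in>A. \<not> \<eta> x}" by blast
    qed
    show "{\<eta> \<in> space M. \<forall>x\<in>A. \<not> \<eta> x} \<subseteq> (\<Inter>n. S n)"
      unfolding S_def using from_nat_into[OF A(2)] by blast
  qed
  ultimately show ?thesis unfolding S_def by simp
qed

theorem lemma4p1: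
  fixes N :: nat and lam p :: real
    and \<mu>BV \<mu>CP :: "real \<Rightarrow> config measure"
    and A :: "nat list set" and t :: real
  assumes "N \<ge> 1" and "lam > 1" and "0 < p" and "p < 1"
    and "spin_system_law N (bv_rate N lam 1) (bern_product N p) \<mu>BV"
    and "spin_system_law N (cp_rate N lam) (bern_product N p) \<mu>CP"
    and "A \<subseteq> tree_V N" and "t \<ge> 0"
  shows "measure (\<mu>BV t) {\<eta> \<in> space (\<mu>BV t). \<forall>x\<in>A. \<not> \<eta> x}
           \<le> measure (\<mu>CP t) {\<eta> \<in> space (\<mu>CP t). \<forall>x\<in>A. \<not> \<eta> x}"
proof -
  have PB: "prob_space (\<mu>BV t)" "sets (\<mu>BV t) = sets (config_space N)"
    using assms(5,8) unfolding spin_system_law_def by auto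
  have PC: "prob_space (\<mu>CP t)" "sets (\<mu>CP t) = sets (config_space N)"
    using assms(6,8) unfolding spin_system_law_def by auto
  have fin: "measure (\<mu>BV t) {\<eta> \<in> space (\<mu>BV t). \<forall>x\<in>B. \<not> \<eta> x}
           \<le> measure (\<mu>CP t) {\<eta> \<in> space (\<mu>CP t). \<forall>x\<in>B. \<not> \<eta> x}"
    if "finite B" "B \<subseteq> tree_V N" for B
    using finite_case[OF assms(2,5,6) that assms(8)] unfolding Z_measure .
  show ?thesis
  proof (cases "finite A")
    case True
    then show ?thesis using fin assms(7) by blast
  next
    case False
    then have A0: "A \<noteq> {}" by auto
    have sub: "from_nat_into A ` {..<n} \<subseteq> tree_V N" for n
      using from_nat_into[OF A0] assms(7) by blast
    show ?thesis
      by (rule LIMSEQ_le[OF lim_meas[OF PB assms(7) A0] lim_meas[OF PC assms(7) A0]])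
         (use fin sub in blast)
  qed
qed

end
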